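(* Let $X$ be a time-homogeneous affine Markov process (as described in the context) on a filtered probability space $(\Omega,\mathcal F,(\mathcal F_t),\mathbb Q)$ with values in a convex set $E\subseteq\mathbb R^d$, with associated functions $\Phi_{(u,v)}(\tau,\gamma)$, $\Psi_{(u,v)}(\tau,\gamma)$. Let $a_0,b_0,c_0$ be integrable deterministic scalar functions, $a,b,c\in\mathbb R^d$ constant vectors, $q$ a constant, and set $r_c(s)=a_0(s)+\langle a,X(s)\rangle$, $\lambda(s)=b_0(s)+\langle b,X(s)\rangle$, $\phi(s)=c_0(s)+\langle c,X(s)\rangle$. Fix $t\le T_{j-1}<T_j$, $\delta=T_j-T_{j-1}$, and a strike $R$ with $1+\delta R>0$. Define $$e^{Z(T_{j-1})}=\frac{1}{1+\delta R}\,\frac{\mathbb E^{\mathbb Q}_{T_{j-1}}\big[e^{\int_{T_{j-1}}^{T_j}\phi(s)ds}\big]}{\mathbb E^{\mathbb Q}_{T_{j-1}}\big[e^{-\int_{T_{j-1}}^{T_j}(r_c(s)+q\lambda(s))ds}\big]},$$ and $$f(T_{j-1})=-\ln(1+\delta R)+\int_{T_{j-1}}^{T_j}(c_0(s)+a_0(s)+q b_0(s))ds+\Phi_{(0,1)}(\delta,c)-\Phi_{(0,1)}(\delta,-(a+qb)),$$ $$g(T_{j-1})=\Psi_{(0,1)}(\delta,c)-\Psi_{(0,1)}(\delta,-(a+qb)).$$ Then the conditional characteristic function of $Z(T_{j-1})$ under the $T_j$-forward measure $\mathbb Q^{T_j}$ is $$\varphi^{T_j}_Z(u)=\mathbb E^{\mathbb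 Q^{T_j}}_t\big[e^{iuZ(T_{j-1})}\big]=\frac{1}{D^{OIS}(t,T_j)}\exp\Big(iu f(T_{j-1})-\int_t^{T_j}a_0(s)ds+\Phi_{(0,1)}(\delta,-a)+\Phi_{(w,1)}(T_{j-1}-t,-a)+\big\langle\Psi_{(w,1)}(T_{j-1}-t,-a),X(t)\big\rangle\Big),$$ where $w=iu\,g(T_{j-1})+\Psi_{(0,1)}(\delta,-a)$. This holds for every $u\in\mathbb C$ for which $\Phi_{(w,1)}(T_{j-1}-t,-a)$ and $\Psi_{(w,1)}(T_{j-1}-t,-a)$ are bounded (finite).
   Context: $\mathbb E^{\mathbb Q}_t$ denotes $\mathbb E^{\mathbb Q}[\,\cdot\,|\mathcal F_t]$. $X$ is a stochastically continuous time-homogeneous affine Markov process with values in a non-empty convex set $E\subseteq\mathbb R^d$; the affine property is used in the following extended form: there exist deterministic functions $\Phi_{(u,v)}(\tau,\gamma)\in\mathbb C$ and $\Psi_{(u,v)}(\tau,\gamma)\in\mathbb C^d$ (solutions of the associated generalized Riccati ODEs with $\Phi_{(u,v)}(0,\gamma)=0$, $\Psi_{(u,v)}(0,\gamma)=u$) such that for all $s\le S$, $\gamma\in\mathbb R^d$ and all $(u,v)\in\mathbb C^{d}\times\mathbb C$ for which the left side is finite, $$\mathbb E^{\mathbb Q}_s\Big[\exp\Big(\langle u,X(S)\rangle+v\int_s^S\langle\gamma,X(r)\rangle dr\Big)\Big]=\exp\big(\Phi_{(u,v)}(S-s,\gamma)+\langle\Psi_{(u,v)}(S-s,\gamma),X(s)\rangle\big).$$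 The OIS discount factor is $D^{OIS}(t,T)=\mathbb E^{\mathbb Q}_t\big[e^{-\int_t^T r_c(s)ds}\big]$. The $T_j$-forward measure $\mathbb Q^{T_j}$ is defined (conditionally on $\mathcal F_t$) by $\frac{d\mathbb Q^{T_j}}{d\mathbb Q}\big|_{\mathcal F_{T_j}}=\frac{e^{-\int_t^{T_j}r_c(s)ds}}{D^{OIS}(t,T_j)}$, so that $\mathbb E^{\mathbb Q^{T_j}}_t[Y]=\mathbb E^{\mathbb Q}_t\big[e^{-\int_t^{T_j}r_c(s)ds}Y\big]/D^{OIS}(t,T_j)$. *)

theory Defs
  imports "HOL-Probability.Probability"
begin

definition cinner :: "complex ^ 'd \<Rightarrow> real ^ 'd \<Rightarrow> complex" where
  "cinner u x = (\<Sum>i\<in>UNIV. u $ i * complex_of_real (x $ i))"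

text \<open>Conditional expectation of a complex-valued random variable given the
  sub-sigma-algebra N, taken componentwise via the library's real conditional
  expectation (defined up to null sets).\<close>
definition cond_expC :: "'w measure \<Rightarrow> 'w measure \<Rightarrow> ('w \<Rightarrow> complex) \<Rightarrow> 'w \<Rightarrow> complex" where
  "cond_expC M N Y w =
     complex_of_real (real_cond_exp M N (\<lambda>v. Re (Y v)) w)
     + \<i> * complex_of_real (real_cond_exp M N (\<lambda>v. Im (Y v)) w)"

definition path_int :: "(real \<Rightarrow> 'w \<Rightarrow> real ^ 'd) \<Rightarrow> real ^ 'd \<Rightarrow> real \<Rightarrow> real \<Rightarrow> 'w \<Rightarrow> real" where
  "path_int X \<gamma> s S w = (LBINT r:{s..S}. \<gamma> \<bullet> X r w)"

text \<open>The extended affine property of X with functions \<Phi>, \<Psi>: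
  \<open>\<Phi> u v \<tau> \<gamma>\<close> stands for \<open>\<Phi>_(u,v)(\<tau>,\<gamma>)\<close>, similarly \<Psi>.
  "Left side finite" is read as integrability of the (complex) exponential.\<close>
definition affine_property ::
  "'w measure \<Rightarrow> (real \<Rightarrow> 'w measure) \<Rightarrow> (real \<Rightarrow> 'w \<Rightarrow> real ^ 'd)
   \<Rightarrow> (complex ^ 'd \<Rightarrow> complex \<Rightarrow> real \<Rightarrow> real ^ 'd \<Rightarrow> complex)
   \<Rightarrow> (complex ^ 'd \<Rightarrow> complex \<Rightarrow> real \<Rightarrow> real ^ 'd \<Rightarrow> complex ^ 'd) \<Rightarrow> bool" where
  "affine_property M F X \<Phi> \<Psi> \<longleftrightarrow>
     (\<forall>s S \<gamma> u v. 0 \<le> s \<longrightarrow> s \<le> S \<longrightarrow>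
        integrable M (\<lambda>w. exp (cinner u (X S w) + v * complex_of_real (path_int X \<gamma> s S w))) \<longrightarrow>
        (AE w in M. cond_expC M (F s)
            (\<lambda>w. exp (cinner u (X S w) + v * complex_of_real (path_int X \<gamma> s S w))) w
          = exp (\<Phi> u v (S - s) \<gamma> + cinner (\<Psi> u v (S - s) \<gamma>) (X s w))))"

definition time_homogeneous_markov ::
  "'w measure \<Rightarrow> (real \<Rightarrow> 'w measure) \<Rightarrow> (real \<Rightarrow> 'w \<Rightarrow> real ^ 'd) \<Rightarrow> bool" where
  "time_homogeneous_markov M F X \<longleftrightarrow>
     (\<exists>P :: real \<Rightarrow> (real ^ 'd \<Rightarrow> real) \<Rightarrow> real ^ 'd \<Rightarrow> real.
        \<forall>f s S. f \<in> borel_measurable borel \<longrightarrow> bounded (range f) \<longrightarrow> 0 \<le> s \<longrightarrow> s \<le> S \<longrightarrow>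
          (AE w in M. real_cond_exp M (F s) (\<lambda>v. f (X S v)) w = P (S - s) f (X s w)))"

definition stoch_continuous :: "'w measure \<Rightarrow> (real \<Rightarrow> 'w \<Rightarrow> real ^ 'd) \<Rightarrow> bool" where
  "stoch_continuous M X \<longleftrightarrow>
     (\<forall>t\<ge>0. \<forall>\<epsilon>>0. ((\<lambda>s. measure M {w \<in> space M. \<epsilon> < dist (X s w) (X t w)}) \<longlongrightarrow> 0)
        (at t within {0..}))"

end

theory Submission
  imports Defs
begin


lemma exp_im0: "Im z = 0 \<Longrightarrow> exp z = complex_of_real (exp (Re z))"
  by (metis complex_eq exp_of_real mult_zero_right add_0_right of_real_0 complex_of_real_def Complex_eq)

lemma cinner_zero_left[simp]: "cinner 0 x = 0"
  by (simp add: cinner_def)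

lemma cinner_add_left: "cinner (u + v) x = cinner u x + cinner v x"
  by (simp add: cinner_def distrib_right sum.distrib)

lemma cinner_diff_left: "cinner (u - v) x = cinner u x - cinner v x"
  by (simp add: cinner_def left_diff_distrib sum_subtractf)

lemma cinner_scale_left: "cinner (c *s v) x = c * cinner v x"
  by (simp add: cinner_def sum_distrib_left mult.assoc)

lemma Im_cinner: "(\<forall>i. Im (v $ i) = 0) \<Longrightarrow> Im (cinner v x) = 0"
  by (simp add: cinner_def Im_sum)

lemma cont_cinner: "continuous_on UNIV (cinner v)"
  unfolding cinner_def by (intro continuous_intros)

lemma meas_cinner[measurable]: "f \<in> borel_measurable N \<Longrightarrow> (\<lambda>w. cinner v (f w)) \<in> borel_measurable N"
  using borel_measurable_continuous_onI[OF cont_cinner] measurable_compose by blast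



context sigma_finite_subalgebra
begin

lemma cond_expC_cong:
  assumes ae: "AE x in M. f x = g x" and [measurable]: "f \<in> borel_measurable M" "g \<in> borel_measurable M"
  shows "AE x in M. cond_expC M F f x = cond_expC M F g x"
proof -
  have "AE x in M. real_cond_exp M F (\<lambda>v. Re (f v)) x = real_cond_exp M F (\<lambda>v. Re (g v)) x"
    by (rule real_cond_exp_cong) (use ae in auto)
  moreover have "AE x in M. real_cond_exp M F (\<lambda>v. Im (f v)) x = real_cond_exp M F (\<lambda>v. Im (g v)) x"
    by (rule real_cond_exp_cong) (use ae in auto)
  ultimately show ?thesis unfolding cond_expC_def by auto
qed

lemma cond_expC_cmult:
  assumes [measurable]: "integrable M f"
  shows "AE x in M. cond_expC M F (\<lambda>w. c * f w) x = c * cond_expC M F f x"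
proof -
  have iR: "integrable M (\<lambda>v. Re (f v))" and iI: "integrable M (\<lambda>v. Im (f v))" using assms by auto
  have e1: "AE x in M. real_cond_exp M F (\<lambda>v. Re c * Re (f v) - Im c * Im (f v)) x
      = Re c * real_cond_exp M F (\<lambda>v. Re (f v)) x - Im c * real_cond_exp M F (\<lambda>v. Im (f v)) x"
  proof -
    have a: "AE x in M. real_cond_exp M F (\<lambda>v. Re c * Re (f v) - Im c * Im (f v)) x
      = real_cond_exp M F (\<lambda>v. Re c * Re (f v)) x - real_cond_exp M F (\<lambda>v. Im c * Im (f v)) x"
      by (rule real_cond_exp_diff) (use iR iI in auto)
    from a real_cond_exp_cmult[OF iR, of "Re c"] real_cond_exp_cmult[OF iI, of "Im c"]
    show ?thesis by eventually_elim auto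
  qed
  have e2: "AE x in M. real_cond_exp M F (\<lambda>v. Re c * Im (f v) + Im c * Re (f v)) x
      = Re c * real_cond_exp M F (\<lambda>v. Im (f v)) x + Im c * real_cond_exp M F (\<lambda>v. Re (f v)) x"
  proof -
    have a: "AE x in M. real_cond_exp M F (\<lambda>v. Re c * Im (f v) + Im c * Re (f v)) x
      = real_cond_exp M F (\<lambda>v. Re c * Im (f v)) x + real_cond_exp M F (\<lambda>v. Im c * Re (f v)) x"
      by (rule real_cond_exp_add) (use iR iI in auto)
    from a real_cond_exp_cmult[OF iR, of "Im c"] real_cond_exp_cmult[OF iI, of "Re c"]
    show ?thesis by eventually_elim auto
  qed
  from e1 e2 show ?thesis
    unfolding cond_expC_def by eventually_elim (auto simp: complex_eq_iff algebra_simps)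
qed

lemma cond_expC_real:
  assumes "f \<in> borel_measurable M"
  shows "AE x in M. cond_expC M F (\<lambda>w. complex_of_real (f w)) x = complex_of_real (real_cond_exp M F f x)"
proof -
  have "AE x in M. real_cond_exp M F (\<lambda>v. 0) x = 0"
    by (rule real_cond_exp_F_meas) auto
  then show ?thesis unfolding cond_expC_def by eventually_elim auto
qed

end



lemma prod_integrable_aux:
  fixes f :: "real \<Rightarrow> 'w \<Rightarrow> real"
  assumes M: "prob_space M"
    and fm[measurable]: "(\<lambda>(r,w). f r w) \<in> borel_measurable (lborel \<Otimes>\<^sub>M M)"
    and bnd: "\<And>r w. \<bar>f r w\<bar> \<le> B"
    and k: "integrable M k"
  shows "integrable (lborel \<Otimes>\<^sub>M M) (\<lambda>(r,w). indicator {s..S} r * f r w * k w)"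
proof -
  interpret prob_space M by fact
  interpret P: pair_sigma_finite lborel M ..
  have km[measurable]: "k \<in> borel_measurable M" using k by auto
  have fr[measurable]: "\<And>r. f r \<in> borel_measurable M"
    using measurable_Pair2[OF fm] by auto
  have j[measurable]: "(\<lambda>(r,w). indicator {s..S} r * f r w * k w) \<in> borel_measurable (lborel \<Otimes>\<^sub>M M)"
    by measurable
  show ?thesis
  proof (rule P.Fubini_integrable)
    show "integrable lborel (\<lambda>r. \<integral>w. norm ((\<lambda>(r,w). indicator {s..S} r * f r w * k w) (r, w)) \<partial>M)"
    proof (rule Bochner_Integration.integrable_bound)
      show "integrable lborel (\<lambda>r. indicator {s..S} r * (\<bar>B\<bar> * (\<integral>w. norm (k w) \<partial>M)))"
        by (intro integrable_mult_left) (auto simp: emeasure_lborel_Icc_eq)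
      show "(\<lambda>r. \<integral>w. norm ((\<lambda>(r,w). indicator {s..S} r * f r w * k w) (r, w)) \<partial>M) \<in> borel_measurable lborel"
        by measurable
      show "AE r in lborel. norm (\<integral>w. norm ((\<lambda>(r,w). indicator {s..S} r * f r w * k w) (r, w)) \<partial>M)
          \<le> norm (indicator {s..S} r * (\<bar>B\<bar> * (\<integral>w. norm (k w) \<partial>M)))"
      proof (rule AE_I2)
        fix r
        have "(\<integral>w. norm (indicator {s..S} r * f r w * k w) \<partial>M) \<le> (\<integral>w. indicator {s..S} r * (\<bar>B\<bar> * norm (k w)) \<partial>M)"
        proof (rule integral_mono)
          show "integrable M (\<lambda>w. indicator {s..S} r * (\<bar>B\<bar> * norm (k w)))" using k by auto
          show "integrable M (\<lambda>w. norm (indicator {s..S} r * f r w * k w))"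
            by (rule Bochner_Integration.integrable_bound[OF \<open>integrable M (\<lambda>w. indicator {s..S} r * (\<bar>B\<bar> * norm (k w)))\<close>])
              (auto simp: abs_mult indicator_def intro!: mult_right_mono order.trans[OF bnd])
          fix w show "norm (indicator {s..S} r * f r w * k w) \<le> indicator {s..S} r * (\<bar>B\<bar> * norm (k w))"
            by (auto simp: abs_mult indicator_def intro!: mult_right_mono order.trans[OF bnd])
        qed
        moreover have "0 \<le> (\<integral>w. norm (indicator {s..S} r * f r w * k w) \<partial>M)" by auto
        ultimately show "norm (\<integral>w. norm ((\<lambda>(r,w). indicator {s..S} r * f r w * k w) (r, w)) \<partial>M)
          \<le> norm (indicator {s..S} r * (\<bar>B\<bar> * (\<integral>w. norm (k w) \<partial>M)))"
          by (simp add: abs_mult)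
      qed
    qed
    show "AE r in lborel. integrable M (\<lambda>w. (\<lambda>(r,w). indicator {s..S} r * f r w * k w) (r, w))"
    proof (rule AE_I2)
      fix r
      show "integrable M (\<lambda>w. (\<lambda>(r,w). indicator {s..S} r * f r w * k w) (r, w))"
        by (rule Bochner_Integration.integrable_bound[of _ "\<lambda>w. \<bar>B\<bar> * k w"]) 
          (use k in \<open>auto simp: abs_mult indicator_def intro!: mult_right_mono order.trans[OF bnd]\<close>)
    qed
  qed fact
qed



lemma bounded_int_aemeas:
  fixes f :: "real \<Rightarrow> 'w \<Rightarrow> real"
  assumes M: "prob_space M" and G: "subalgebra M G"
    and fm[measurable]: "(\<lambda>(r,w). f r w) \<in> borel_measurable (lborel \<Otimes>\<^sub>M M)"
    and fG: "\<And>r. r \<in> {s..S} \<Longrightarrow> f r \<in> borel_measurable G"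
    and bnd: "\<And>r w. \<bar>f r w\<bar> \<le> B"
  shows "\<exists>g\<in>borel_measurable G. AE w in M. (LBINT r:{s..S}. f r w) = g w"
proof -
  interpret prob_space M by fact
  interpret finite_measure_subalgebra M G by unfold_locales (rule G)
  interpret P: pair_sigma_finite lborel M ..
  define Y where "Y w = (\<integral>r. indicator {s..S} r * f r w \<partial>lborel)" for w
  have Yeq: "\<And>w. (LBINT r:{s..S}. f r w) = Y w" by (simp add: Y_def set_lebesgue_integral_def)
  have fr[measurable]: "\<And>r. f r \<in> borel_measurable M"
    using measurable_Pair2[OF fm] by auto
  have bB: "\<And>r w. \<bar>f r w\<bar> \<le> \<bar>B\<bar>" using bnd by (meson abs_ge_self order_trans)
  have pint: "\<And>k. integrable M k \<Longrightarrow> integrable (lborel \<Otimes>\<^sub>M M) (\<lambda>(r,w). indicator {s..S} r * f r w * k w)"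
    by (rule prod_integrable_aux[OF M fm bnd])
  have Yk: "integrable M (\<lambda>w. Y w * k w)"
    and Fub: "(\<integral>w. Y w * k w \<partial>M) = (\<integral>r. (\<integral>w. indicator {s..S} r * f r w * k w \<partial>M) \<partial>lborel)"
    if k: "integrable M k" for k
  proof -
    have e: "\<And>w. Y w * k w = (\<integral>r. indicator {s..S} r * f r w * k w \<partial>lborel)"
      by (simp add: Y_def)
    show "integrable M (\<lambda>w. Y w * k w)"
      unfolding e using P.integrable_snd[OF pint[OF k]] by simp
    show "(\<integral>w. Y w * k w \<partial>M) = (\<integral>r. (\<integral>w. indicator {s..S} r * f r w * k w \<partial>M) \<partial>lborel)"
      unfolding e using P.Fubini_integral[OF pint[OF k]] by simp
  qed
  have Yint: "integrable M Y" using Yk[of "\<lambda>_. 1"] by simp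
  have Ym[measurable]: "Y \<in> borel_measurable M" using Yint by auto
  define g where "g = real_cond_exp M G Y"
  have gG[measurable]: "g \<in> borel_measurable G" unfolding g_def by simp
  have gM[measurable]: "g \<in> borel_measurable M" unfolding g_def by simp
  have gint: "integrable M g" unfolding g_def by (rule real_cond_exp_int(1)[OF Yint])
  define h where "h w = sgn (Y w - g w)" for w
  have hm[measurable]: "h \<in> borel_measurable M" unfolding h_def by measurable
  have hint: "integrable M h"
    by (rule Bochner_Integration.integrable_bound[of _ "\<lambda>_. 1::real"]) (auto simp: h_def sgn_if)
  define hG where "hG = real_cond_exp M G h"
  have hGG[measurable]: "hG \<in> borel_measurable G" unfolding hG_def by simp
  have hGint: "integrable M hG" unfolding hG_def by (rule real_cond_exp_int(1)[OF hint])
  have step2: "(\<integral>w. indicator {s..S} r * f r w * h w \<partial>M) = (\<integral>w. indicator {s..S} r * f r w * hG w \<partial>M)" for r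
  proof (cases "r \<in> {s..S}")
    case True
    have frG[measurable]: "f r \<in> borel_measurable G" using fG[OF True] .
    have "integrable M (\<lambda>w. f r w * h w)"
      by (rule Bochner_Integration.integrable_bound[of _ "\<lambda>_. B"])
        (use bB in \<open>auto simp: h_def sgn_if abs_mult\<close>)
    from real_cond_exp_intg(2)[OF this frG hm]
    show ?thesis using True by (simp add: hG_def mult.assoc)
  qed simp
  have "(\<integral>w. Y w * h w \<partial>M) = (\<integral>w. Y w * hG w \<partial>M)"
    using Fub[OF hint] Fub[OF hGint] step2 by simp
  also have "\<dots> = (\<integral>w. hG w * g w \<partial>M)"
    using real_cond_exp_intg(2)[of hG Y] Yk[OF hGint] by (simp add: g_def mult.commute)
  also have "\<dots> = (\<integral>w. g w * h w \<partial>M)"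
  proof -
    have "integrable M (\<lambda>w. g w * h w)"
      by (rule Bochner_Integration.integrable_bound[OF gint]) (auto simp: h_def sgn_if)
    from real_cond_exp_intg(2)[OF this gG hm] show ?thesis by (simp add: hG_def mult.commute)
  qed
  finally have "(\<integral>w. Y w * h w \<partial>M) - (\<integral>w. g w * h w \<partial>M) = 0" by simp
  moreover have "(\<integral>w. Y w * h w \<partial>M) - (\<integral>w. g w * h w \<partial>M) = (\<integral>w. \<bar>Y w - g w\<bar> \<partial>M)"
  proof -
    have i2: "integrable M (\<lambda>w. g w * h w)"
      by (rule Bochner_Integration.integrable_bound[OF gint]) (auto simp: h_def sgn_if)
    have "(\<integral>w. Y w * h w \<partial>M) - (\<integral>w. g w * h w \<partial>M) = (\<integral>w. Y w * h w - g w * h w \<partial>M)"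
      using Yk[OF hint] i2 by simp
    also have "\<dots> = (\<integral>w. \<bar>Y w - g w\<bar> \<partial>M)"
      by (rule Bochner_Integration.integral_cong) (auto simp: h_def sgn_if)
    finally show ?thesis .
  qed
  ultimately have "(\<integral>w. \<bar>Y w - g w\<bar> \<partial>M) = 0" by simp
  then have "AE w in M. \<bar>Y w - g w\<bar> = 0"
    using integral_nonneg_eq_0_iff_AE[of M "\<lambda>w. \<bar>Y w - g w\<bar>"] Yint gint by auto
  then have "AE w in M. (LBINT r:{s..S}. f r w) = g w" unfolding Yeq by auto
  with gG show ?thesis by blast
qed



lemma int_aemeas:
  fixes f :: "real \<Rightarrow> 'w \<Rightarrow> real"
  assumes M: "prob_space M" and G: "subalgebra M G"
    and fm[measurable]: "(\<lambda>(r,w). f r w) \<in> borel_measurable (lborel \<Otimes>\<^sub>M M)"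
    and fG: "\<And>r. r \<in> {s..S} \<Longrightarrow> f r \<in> borel_measurable G"
    and fi: "\<And>w. w \<in> space M \<Longrightarrow> set_integrable lborel {s..S} (\<lambda>r. f r w)"
  shows "\<exists>g\<in>borel_measurable G. AE w in M. (LBINT r:{s..S}. f r w) = g w"
proof -
  define fn where "fn n r w = max (- real n) (min (real n) (f r w))" for n r w
  have "\<exists>g\<in>borel_measurable G. AE w in M. (LBINT r:{s..S}. fn n r w) = g w" for n
  proof (rule bounded_int_aemeas[OF M G, where B="real n"])
    show "(\<lambda>(r,w). fn n r w) \<in> borel_measurable (lborel \<Otimes>\<^sub>M M)" unfolding fn_def by measurable
    show "\<And>r. r \<in> {s..S} \<Longrightarrow> fn n r \<in> borel_measurable G" unfolding fn_def using fG by measurable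
    show "\<And>r w. \<bar>fn n r w\<bar> \<le> real n" unfolding fn_def by auto
  qed
  then obtain gs where gs: "\<And>n. gs n \<in> borel_measurable G"
    "\<And>n. AE w in M. (LBINT r:{s..S}. fn n r w) = gs n w" by metis
  define g where "g w = lim (\<lambda>n. gs n w)" for w
  have gG: "g \<in> borel_measurable G" unfolding g_def using gs(1) by measurable
  have "AE w in M. \<forall>n. (LBINT r:{s..S}. fn n r w) = gs n w"
    using gs(2) by (simp add: AE_all_countable)
  then have "AE w in M. (LBINT r:{s..S}. f r w) = g w"
  proof (rule AE_mp[OF _ AE_I2[OF impI]])
    fix w assume w: "w \<in> space M" and e: "\<forall>n. (LBINT r:{s..S}. fn n r w) = gs n w"
    have fw[measurable]: "(\<lambda>r. f r w) \<in> borel_measurable lborel"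
      using measurable_Pair1[OF fm w] by simp
    have iw: "integrable lborel (\<lambda>r. indicator {s..S} r * f r w)"
      using fi[OF w] by (simp add: set_integrable_def)
    have "(\<lambda>n. \<integral>r. indicator {s..S} r * fn n r w \<partial>lborel) \<longlonglongrightarrow> (\<integral>r. indicator {s..S} r * f r w \<partial>lborel)"
    proof (rule integral_dominated_convergence[where w="\<lambda>r. \<bar>indicator {s..S} r * f r w\<bar>"])
      show "(\<lambda>r. indicator {s..S} r * f r w) \<in> borel_measurable lborel" by measurable
      show "\<And>n. (\<lambda>r. indicator {s..S} r * fn n r w) \<in> borel_measurable lborel" unfolding fn_def by measurable
      show "integrable lborel (\<lambda>r. \<bar>indicator {s..S} r * f r w\<bar>)" using iw by auto
      show "AE r in lborel. (\<lambda>n. indicator {s..S} r * fn n r w) \<longlonglongrightarrow> indicator {s..S} r * f r w"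
      proof (rule AE_I2, rule tendsto_mult_left, rule tendsto_eventually)
        fix r
        obtain N :: nat where "\<bar>f r w\<bar> \<le> real N" using real_arch_simple by blast
        then show "\<forall>\<^sub>F n in sequentially. fn n r w = f r w"
          unfolding eventually_sequentially fn_def
          by (intro exI[of _ N]) auto
      qed
      show "\<And>n. AE r in lborel. norm (indicator {s..S} r * fn n r w) \<le> \<bar>indicator {s..S} r * f r w\<bar>"
        unfolding fn_def by (auto simp: indicator_def)
    qed
    then have "(\<lambda>n. gs n w) \<longlonglongrightarrow> (LBINT r:{s..S}. f r w)"
      using e by (simp add: set_lebesgue_integral_def)
    then show "(LBINT r:{s..S}. f r w) = g w" unfolding g_def by (simp add: limI)
  qed
  with gG show ?thesis by blast
qed



context sigma_finite_subalgebra
begin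

lemma nn_rce:
  assumes L: "integrable M L" and pos: "\<And>x. 0 \<le> L x"
  shows "AE x in M. nn_cond_exp M F (\<lambda>x. ennreal (L x)) x = ennreal (real_cond_exp M F L x)"
proof -
  have Lm[measurable]: "L \<in> borel_measurable M" using L by auto
  have z: "(\<lambda>x. ennreal (- L x)) = (\<lambda>x. 0)"
    using pos by (auto simp: ennreal_neg fun_eq_iff)
  have z2: "AE x in M. (\<lambda>x. 0::ennreal) x = nn_cond_exp M F (\<lambda>x. 0) x"
    by (rule nn_cond_exp_F_meas) simp
  have "(\<integral>\<^sup>+x. nn_cond_exp M F (\<lambda>x. ennreal (L x)) x \<partial>M) = (\<integral>\<^sup>+x. ennreal (L x) \<partial>M)"
    using nn_cond_exp_intg[of "\<lambda>_. 1" "\<lambda>x. ennreal (L x)"] by simp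
  also have "\<dots> < \<infinity>" using L by (simp add: integrable_iff_bounded pos)
  finally have fin: "AE x in M. nn_cond_exp M F (\<lambda>x. ennreal (L x)) x \<noteq> \<infinity>"
    by (intro nn_integral_PInf_AE) auto
  from fin z2 show ?thesis
    unfolding real_cond_exp_def z by eventually_elim (auto simp: less_top)
qed

lemma integrable_pullout_nonneg:
  fixes K :: "'a \<Rightarrow> complex"
  assumes K[measurable]: "K \<in> borel_measurable F" and L: "integrable M L" and pos: "\<And>x. 0 \<le> L x"
    and int: "integrable M (\<lambda>w. K w * complex_of_real (real_cond_exp M F L w))"
  shows "integrable M (\<lambda>w. K w * complex_of_real (L w))"
proof -
  have Lm[measurable]: "L \<in> borel_measurable M" using L by auto
  have KM[measurable]: "K \<in> borel_measurable M" using K measurable_from_subalg[OF subalg] by blast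
  have "(\<integral>\<^sup>+w. norm (K w * complex_of_real (L w)) \<partial>M) = (\<integral>\<^sup>+w. ennreal (norm (K w)) * ennreal (L w) \<partial>M)"
    using pos by (intro nn_integral_cong) (simp add: norm_mult ennreal_mult)
  also have "\<dots> = (\<integral>\<^sup>+w. ennreal (norm (K w)) * nn_cond_exp M F (\<lambda>x. ennreal (L x)) w \<partial>M)"
    by (rule nn_cond_exp_intg[symmetric]) auto
  also have "\<dots> = (\<integral>\<^sup>+w. ennreal (norm (K w)) * ennreal (real_cond_exp M F L w) \<partial>M)"
    using nn_rce[OF L pos] by (intro nn_integral_cong_AE) auto
  also have "\<dots> = (\<integral>\<^sup>+w. norm (K w * complex_of_real (real_cond_exp M F L w)) \<partial>M)"
    using real_cond_exp_pos[of L] pos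
    by (intro nn_integral_cong_AE) (auto simp: norm_mult ennreal_mult)
  also have "\<dots> < \<infinity>" using int by (simp add: integrable_iff_bounded)
  finally show ?thesis by (simp add: integrable_iff_bounded)
qed

end



lemma tower_pullout:
  fixes K :: "'w \<Rightarrow> complex"
  assumes M: "prob_space M" and G: "subalgebra M G" and H: "subalgebra G H"
    and K[measurable]: "K \<in> borel_measurable G" and L: "integrable M L" and pos: "\<And>x. 0 \<le> L x"
    and Lam[measurable]: "Lr \<in> borel_measurable M"
    and ce: "AE w in M. real_cond_exp M G L w = Lr w"
    and int: "integrable M (\<lambda>w. K w * complex_of_real (Lr w))"
  shows "AE w in M. cond_expC M H (\<lambda>w. K w * complex_of_real (L w)) w
                  = cond_expC M H (\<lambda>w. K w * complex_of_real (Lr w)) w"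
    and "integrable M (\<lambda>w. K w * complex_of_real (L w))"
proof -
  interpret prob_space M by fact
  interpret G: finite_measure_subalgebra M G by unfold_locales (rule G)
  have MH: "subalgebra M H" using G H by (auto simp: subalgebra_def)
  interpret H: finite_measure_subalgebra M H by unfold_locales (rule MH)
  have Lm[measurable]: "L \<in> borel_measurable M" using L by auto
  have KM[measurable]: "K \<in> borel_measurable M" using K measurable_from_subalg[OF G] by blast
  have int2: "integrable M (\<lambda>w. K w * complex_of_real (real_cond_exp M G L w))"
    using int ce by (subst integrable_cong_AE) auto
  have KL: "integrable M (\<lambda>w. K w * complex_of_real (L w))"
    by (rule G.integrable_pullout_nonneg[OF K L pos int2])
  have part: "AE w in M. real_cond_exp M H (\<lambda>v. P (K v) * L v) w = real_cond_exp M H (\<lambda>v. P (K v) * Lr v) w"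
    if P: "P = Re \<or> P = Im" for P
  proof -
    have PKm[measurable]: "(\<lambda>v. P (K v)) \<in> borel_measurable G" using P by auto
    have PKM[measurable]: "(\<lambda>v. P (K v)) \<in> borel_measurable M" using P by auto
    have i1: "integrable M (\<lambda>v. P (K v) * L v)"
      using P integrable_Re[OF KL] integrable_Im[OF KL] by auto
    have a: "AE w in M. real_cond_exp M H (real_cond_exp M G (\<lambda>v. P (K v) * L v)) w
                     = real_cond_exp M H (\<lambda>v. P (K v) * L v) w"
      by (rule H.real_cond_exp_nested_subalg[OF G H i1])
    have b0: "AE w in M. real_cond_exp M G (\<lambda>v. P (K v) * L v) w = P (K w) * real_cond_exp M G L w"
      by (rule G.real_cond_exp_mult) (use i1 in auto)
    have b: "AE w in M. real_cond_exp M H (real_cond_exp M G (\<lambda>v. P (K v) * L v)) w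
                     = real_cond_exp M H (\<lambda>v. P (K v) * Lr v) w"
      by (rule H.real_cond_exp_cong) (use b0 ce in auto)
    from a b show ?thesis by eventually_elim simp
  qed
  show "integrable M (\<lambda>w. K w * complex_of_real (L w))" by (rule KL)
  from part[of Re, simplified] part[of Im, simplified] show "AE w in M. cond_expC M H (\<lambda>w. K w * complex_of_real (L w)) w
                  = cond_expC M H (\<lambda>w. K w * complex_of_real (Lr w)) w"
    unfolding cond_expC_def by eventually_elim simp
qed



lemma pathint_meas:
  fixes X :: "real \<Rightarrow> 'w \<Rightarrow> real ^ 'd"
  assumes M: "prob_space M" and jm: "(\<lambda>(r, w). X r w) \<in> borel_measurable (lborel \<Otimes>\<^sub>M M)"
  shows "(\<lambda>w. LBINT r:{s..S}. \<gamma> \<bullet> X r w) \<in> borel_measurable M"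
proof -
  interpret prob_space M by fact
  have sw: "(\<lambda>p. X (snd p) (fst p)) \<in> borel_measurable (M \<Otimes>\<^sub>M lborel)"
    using measurable_compose[OF measurable_pair_swap' jm] by (simp add: case_prod_beta)
  have [measurable]: "(\<lambda>(w, r). indicator {s..S} r *\<^sub>R (\<gamma> \<bullet> X r w)) \<in> borel_measurable (M \<Otimes>\<^sub>M lborel)"
    using sw by (simp add: case_prod_beta) measurable
  show ?thesis unfolding set_lebesgue_integral_def
    by (rule lborel.borel_measurable_lebesgue_integral) fact
qed

lemma joint_inner_meas:
  fixes X :: "real \<Rightarrow> 'w \<Rightarrow> real ^ 'd"
  assumes jm: "(\<lambda>(r, w). X r w) \<in> borel_measurable (lborel \<Otimes>\<^sub>M M)"
  shows "(\<lambda>(r, w). \<gamma> \<bullet> X r w) \<in> borel_measurable (lborel \<Otimes>\<^sub>M M)"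
proof -
  have "(\<lambda>p. \<gamma> \<bullet> (\<lambda>(r, w). X r w) p) \<in> borel_measurable (lborel \<Otimes>\<^sub>M M)"
    using jm by measurable
  then show ?thesis by (simp add: case_prod_beta)
qed

lemma im0_Phi:
  assumes rv: "\<And>u v \<tau> \<gamma>. (\<forall>i. Im (u $ i) = 0) \<Longrightarrow> Im v = 0 \<Longrightarrow>
                         Im (\<Phi> u v \<tau> \<gamma>) = 0 \<and> (\<forall>i. Im (\<Psi> u v \<tau> \<gamma> $ i) = 0)"
  shows "Im (\<Phi> 0 1 \<tau> \<gamma> + cinner (\<Psi> 0 1 \<tau> \<gamma>) x) = 0" "Im (\<Phi> 0 1 \<tau> \<gamma>) = 0"
     "Im (cinner (\<Psi> 0 1 \<tau> \<gamma>) x) = 0"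
  using rv[of 0 1 \<tau> \<gamma>] Im_cinner[of "\<Psi> 0 1 \<tau> \<gamma>" x] by auto

lemma affine01:
  fixes X :: "real \<Rightarrow> 'w \<Rightarrow> real ^ 'd"
  assumes M: "prob_space M" and sub: "\<And>s. subalgebra M (F s)"
    and jm: "(\<lambda>(r, w). X r w) \<in> borel_measurable (lborel \<Otimes>\<^sub>M M)"
    and aff: "affine_property M F X \<Phi> \<Psi>"
    and st: "0 \<le> s" "s \<le> S"
    and int: "integrable M (\<lambda>w. exp (path_int X \<gamma> s S w))"
  shows "AE w in M. complex_of_real (real_cond_exp M (F s) (\<lambda>w. exp (path_int X \<gamma> s S w)) w)
            = exp (\<Phi> 0 1 (S - s) \<gamma> + cinner (\<Psi> 0 1 (S - s) \<gamma>) (X s w))"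
proof -
  interpret prob_space M by fact
  interpret finite_measure_subalgebra M "F s" by unfold_locales (rule sub)
  have pm[measurable]: "path_int X \<gamma> s S \<in> borel_measurable M"
    using pathint_meas[OF M jm] unfolding path_int_def .
  have e: "(\<lambda>w. exp (cinner 0 (X S w) + 1 * complex_of_real (path_int X \<gamma> s S w)))
      = (\<lambda>w. complex_of_real (exp (path_int X \<gamma> s S w)))"
    by (simp add: exp_of_real)
  have i2: "integrable M (\<lambda>w. exp (cinner 0 (X S w) + 1 * complex_of_real (path_int X \<gamma> s S w)))"
    unfolding e using int by auto
  have a: "AE w in M. cond_expC M (F s) (\<lambda>w. complex_of_real (exp (path_int X \<gamma> s S w))) w
      = exp (\<Phi> 0 1 (S - s) \<gamma> + cinner (\<Psi> 0 1 (S - s) \<gamma>) (X s w))"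
    using aff[unfolded affine_property_def, rule_format, of s S 0 1 \<gamma>, OF st i2] unfolding e .
  have b: "AE w in M. cond_expC M (F s) (\<lambda>w. complex_of_real (exp (path_int X \<gamma> s S w))) w
      = complex_of_real (real_cond_exp M (F s) (\<lambda>w. exp (path_int X \<gamma> s S w)) w)"
    by (rule cond_expC_real) measurable
  from a b show ?thesis by eventually_elim simp
qed



lemma si_eq: "(\<lambda>r. indicator A r *\<^sub>R (\<gamma> \<bullet> X r)) = (\<lambda>r. \<gamma> \<bullet> (indicator A r *\<^sub>R X r))"
  by (simp add: inner_scaleR_right fun_eq_iff)

lemma si_inner:
  fixes X :: "real \<Rightarrow> real ^ 'd"
  assumes "set_integrable lborel A X"
  shows "set_integrable lborel A (\<lambda>r. \<gamma> \<bullet> X r)"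
  using assms unfolding set_integrable_def si_eq by (rule integrable_inner_right)

lemma pi_inner:
  fixes X :: "real \<Rightarrow> real ^ 'd"
  assumes "set_integrable lborel A X"
  shows "(LBINT r:A. \<gamma> \<bullet> X r) = \<gamma> \<bullet> (LBINT r:A. X r)"
  unfolding set_lebesgue_integral_def si_eq
  by (rule integral_inner_right) (use assms in \<open>simp add: set_integrable_def\<close>)

lemma lin1:
  fixes X :: "real \<Rightarrow> real ^ 'd"
  assumes "set_integrable lborel A X" "set_integrable lborel A h"
  shows "(LBINT r:A. h r + \<gamma> \<bullet> X r) = (LBINT r:A. h r) + \<gamma> \<bullet> (LBINT r:A. X r)"
  using set_integral_add(2)[OF assms(2) si_inner[OF assms(1)]] pi_inner[OF assms(1)] by simp

lemma split_int:
  fixes f :: "real \<Rightarrow> 'b::{banach, second_countable_topology}"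
  assumes "t \<le> Tp" "Tp \<le> Tj" "set_integrable lborel {t..Tj} f"
  shows "(LBINT r:{t..Tj}. f r) = (LBINT r:{t..Tp}. f r) + (LBINT r:{Tp..Tj}. f r)"
proof -
  have u: "{t..Tp} \<union> {Tp..Tj} = {t..Tj}" using assms by auto
  have "(LBINT r:{t..Tp} \<union> {Tp..Tj}. f r) = (LBINT r:{t..Tp}. f r) + (LBINT r:{Tp..Tj}. f r)"
  proof (rule set_integral_Un_AE)
    show "AE x in lborel. \<not> (x \<in> {t..Tp} \<and> x \<in> {Tp..Tj})"
      using AE_lborel_singleton[of Tp] by eventually_elim auto
    show "set_integrable lborel {t..Tp} f"
      by (rule set_integrable_subset[OF assms(3)]) (use assms in auto)
    show "set_integrable lborel {Tp..Tj} f"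
      by (rule set_integrable_subset[OF assms(3)]) (use assms in auto)
  qed auto
  then show ?thesis unfolding u .
qed



theorem proposition1:
  fixes M :: "'w measure" and F :: "real \<Rightarrow> 'w measure"
    and X :: "real \<Rightarrow> 'w \<Rightarrow> real ^ 'd" and E :: "(real ^ 'd) set"
    and \<Phi> :: "complex ^ 'd \<Rightarrow> complex \<Rightarrow> real \<Rightarrow> real ^ 'd \<Rightarrow> complex"
    and \<Psi> :: "complex ^ 'd \<Rightarrow> complex \<Rightarrow> real \<Rightarrow> real ^ 'd \<Rightarrow> complex ^ 'd"
    and a0 b0 c0 :: "real \<Rightarrow> real" and a b c :: "real ^ 'd"
    and q R t Tp Tj :: real and u :: complex
  defines "Z \<equiv> \<lambda>w. ln ((1 / (1 + (Tj - Tp) * R)) *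
                 (real_cond_exp M (F Tp) (\<lambda>v. exp (LBINT s:{Tp..Tj}. c0 s + c \<bullet> X s v)) w
                  / real_cond_exp M (F Tp)
                      (\<lambda>v. exp (- (LBINT s:{Tp..Tj}. (a0 s + a \<bullet> X s v) + q * (b0 s + b \<bullet> X s v)))) w))"
    and "D \<equiv> real_cond_exp M (F t) (\<lambda>v. exp (- (LBINT s:{t..Tj}. a0 s + a \<bullet> X s v)))"
    and "fT \<equiv> - complex_of_real (ln (1 + (Tj - Tp) * R))
              + complex_of_real (LBINT s:{Tp..Tj}. c0 s + a0 s + q * b0 s)
              + \<Phi> 0 1 (Tj - Tp) c - \<Phi> 0 1 (Tj - Tp) (- (a + q *\<^sub>R b))"
    and "W \<equiv> (\<i> * u) *s (\<Psi> 0 1 (Tj - Tp) c - \<Psi> 0 1 (Tj - Tp) (- (a + q *\<^sub>R b)))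
              + \<Psi> 0 1 (Tj - Tp) (- a)"
  assumes M: "prob_space M"
    and filt: "filtration (space M) F" and sub: "\<And>s. subalgebra M (F s)"
    and adapted: "\<And>s. X s \<in> borel_measurable (F s)"
    and joint_meas: "(\<lambda>(r, w). X r w) \<in> borel_measurable (lborel \<Otimes>\<^sub>M M)"
    and paths_int: "\<And>w s S. w \<in> space M \<Longrightarrow> set_integrable lborel {s..S} (\<lambda>r. X r w)"
    and E: "convex E" "E \<noteq> {}" and X_E: "\<And>s w. w \<in> space M \<Longrightarrow> X s w \<in> E"
    and stoch_cont: "stoch_continuous M X"
    and markov: "time_homogeneous_markov M F X"
    and affine: "affine_property M F X \<Phi> \<Psi>"
    and init: "\<And>u v \<gamma>. \<Phi> u v 0 \<gamma> = 0 \<and> \<Psi> u v 0 \<gamma> = u"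
    and real_valued: "\<And>u v \<tau> \<gamma>. (\<forall>i. Im (u $ i) = 0) \<Longrightarrow> Im v = 0 \<Longrightarrow>
                         Im (\<Phi> u v \<tau> \<gamma>) = 0 \<and> (\<forall>i. Im (\<Psi> u v \<tau> \<gamma> $ i) = 0)"
    and a0_int: "\<And>s S. set_integrable lborel {s..S} a0"
    and b0_int: "\<And>s S. set_integrable lborel {s..S} b0"
    and c0_int: "\<And>s S. set_integrable lborel {s..S} c0"
    and times: "0 \<le> t" "t \<le> Tp" "Tp < Tj"
    and strike: "1 + (Tj - Tp) * R > 0"
    and int_phi: "integrable M (\<lambda>v. exp (LBINT s:{Tp..Tj}. c0 s + c \<bullet> X s v))"
    and int_rcl: "integrable M (\<lambda>v. exp (- (LBINT s:{Tp..Tj}. (a0 s + a \<bullet> X s v) + q * (b0 s + b \<bullet> X s v))))"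
    and int_rc1: "integrable M (\<lambda>v. exp (- (LBINT s:{Tp..Tj}. a0 s + a \<bullet> X s v)))"
    and int_rc2: "integrable M (\<lambda>v. exp (- (LBINT s:{t..Tj}. a0 s + a \<bullet> X s v)))"
    and u_ok: "integrable M (\<lambda>w. exp (cinner W (X Tp w) + complex_of_real (path_int X (- a) t Tp w)))"
  shows "AE w in M.
           cond_expC M (F t)
             (\<lambda>v. complex_of_real (exp (- (LBINT s:{t..Tj}. a0 s + a \<bullet> X s v))) * exp (\<i> * u * complex_of_real (Z v))) w
             / complex_of_real (D w)
         = (1 / complex_of_real (D w)) *
           exp (\<i> * u * fT - complex_of_real (LBINT s:{t..Tj}. a0 s) + \<Phi> 0 1 (Tj - Tp) (- a)
                + \<Phi> W 1 (Tp - t) (- a) + cinner (\<Psi> W 1 (Tp - t) (- a)) (X t w))"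
proof -
  interpret prob_space M by (rule M)
  define V where "V s S w = (LBINT r:{s..S}. X r w)" for s S w
  have Tp0: "0 \<le> Tp" and tTp: "t \<le> Tp" and TpTj: "Tp \<le> Tj" using times by linarith+
  have PI: "\<And>\<gamma> s S w. w \<in> space M \<Longrightarrow> path_int X \<gamma> s S w = \<gamma> \<bullet> V s S w"
    unfolding path_int_def V_def using paths_int by (simp add: pi_inner)
  have PIm[measurable]: "\<And>\<gamma> s S. path_int X \<gamma> s S \<in> borel_measurable M"
    unfolding path_int_def using pathint_meas[OF M joint_meas] .
  have XM[measurable]: "\<And>s. X s \<in> borel_measurable M"
    using measurable_from_subalg[OF sub adapted] .
  define C0 where "C0 = (LBINT s:{Tp..Tj}. c0 s)"
  define AQ0 where "AQ0 = (LBINT s:{Tp..Tj}. a0 s + q * b0 s)"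
  define A1 where "A1 = (LBINT s:{Tp..Tj}. a0 s)"
  define A0 where "A0 = (LBINT s:{t..Tj}. a0 s)"
  have aq_int: "set_integrable lborel {Tp..Tj} (\<lambda>s. a0 s + q * b0 s)"
    using a0_int b0_int by auto
  have I1: "\<And>w. w \<in> space M \<Longrightarrow> (LBINT s:{Tp..Tj}. c0 s + c \<bullet> X s w) = C0 + c \<bullet> V Tp Tj w"
    unfolding C0_def V_def using lin1[OF paths_int c0_int] by simp
  have I2: "(LBINT s:{Tp..Tj}. (a0 s + a \<bullet> X s w) + q * (b0 s + b \<bullet> X s w)) = AQ0 + (a + q *\<^sub>R b) \<bullet> V Tp Tj w"
    if w: "w \<in> space M" for w
  proof -
    have "(\<lambda>s. (a0 s + a \<bullet> X s w) + q * (b0 s + b \<bullet> X s w)) = (\<lambda>s. (a0 s + q * b0 s) + (a + q *\<^sub>R b) \<bullet> X s w)"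
      by (simp add: fun_eq_iff inner_add_left algebra_simps)
    then show ?thesis unfolding AQ0_def V_def using lin1[OF paths_int[OF w] aq_int] by simp
  qed
  have I3: "\<And>w. w \<in> space M \<Longrightarrow> (LBINT s:{Tp..Tj}. a0 s + a \<bullet> X s w) = A1 + a \<bullet> V Tp Tj w"
    unfolding A1_def V_def using lin1[OF paths_int a0_int] by simp
  have I4: "(LBINT s:{t..Tj}. a0 s + a \<bullet> X s w) = A0 + a \<bullet> V t Tp w + a \<bullet> V Tp Tj w"
    if w: "w \<in> space M" for w
  proof -
    have "V t Tj w = V t Tp w + V Tp Tj w"
      unfolding V_def by (rule split_int[OF tTp TpTj paths_int[OF w]])
    then show ?thesis unfolding A0_def using lin1[OF paths_int[OF w] a0_int, of t Tj a]
      by (simp add: V_def inner_add_right)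
  qed
  have I5: "(LBINT s:{Tp..Tj}. c0 s + a0 s + q * b0 s) = C0 + AQ0"
  proof -
    have "(\<lambda>s. c0 s + a0 s + q * b0 s) = (\<lambda>s. c0 s + (a0 s + q * b0 s))" by (simp add: fun_eq_iff)
    then show ?thesis unfolding C0_def AQ0_def using set_integral_add(2)[OF c0_int aq_int] by simp
  qed
  have creal: "\<And>r z. complex_of_real r = exp z \<Longrightarrow> Im z = 0 \<Longrightarrow> r = exp (Re z)"
    by (simp add: exp_im0)
  have im0a: "\<And>\<tau> \<gamma>. Im (\<Phi> 0 1 \<tau> \<gamma>) = 0" using real_valued[of 0 1] by simp
  have im0b: "\<And>\<tau> \<gamma> x. Im (cinner (\<Psi> 0 1 \<tau> \<gamma>) x) = 0"
    using real_valued[of 0 1] by (intro Im_cinner) simp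
  note im0 = im0a im0b
  interpret STp: finite_measure_subalgebra M "F Tp" by unfold_locales (rule sub)
  have iA: "integrable M (\<lambda>w. exp (path_int X c Tp Tj w))"
  proof -
    have i: "integrable M (\<lambda>w. exp (- C0) * exp (LBINT s:{Tp..Tj}. c0 s + c \<bullet> X s w))"
      using int_phi by auto
    have e: "\<And>w. w \<in> space M \<Longrightarrow> exp (- C0) * exp (LBINT s:{Tp..Tj}. c0 s + c \<bullet> X s w) = exp (path_int X c Tp Tj w)"
      using I1 PI by (simp add: mult_exp_exp)
    show ?thesis by (rule iffD1[OF Bochner_Integration.integrable_cong[OF refl e] i])
  qed
  have NA: "AE w in M. complex_of_real (real_cond_exp M (F Tp) (\<lambda>w. exp (path_int X c Tp Tj w)) w)
      = exp (\<Phi> 0 1 (Tj - Tp) c + cinner (\<Psi> 0 1 (Tj - Tp) c) (X Tp w))"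
    using affine01[OF M sub joint_meas affine Tp0 TpTj iA] .
  have N: "AE w in M. real_cond_exp M (F Tp) (\<lambda>v. exp (LBINT s:{Tp..Tj}. c0 s + c \<bullet> X s v)) w
      = exp C0 * exp (Re (\<Phi> 0 1 (Tj - Tp) c) + Re (cinner (\<Psi> 0 1 (Tj - Tp) c) (X Tp w)))"
  proof -
    have m1: "(\<lambda>v. exp (LBINT s:{Tp..Tj}. c0 s + c \<bullet> X s v)) \<in> borel_measurable M"
      using int_phi by auto
    have a: "AE w in M. real_cond_exp M (F Tp) (\<lambda>v. exp (LBINT s:{Tp..Tj}. c0 s + c \<bullet> X s v)) w
        = real_cond_exp M (F Tp) (\<lambda>v. exp C0 * exp (path_int X c Tp Tj v)) w"
      by (rule STp.real_cond_exp_cong) (use I1 PI m1 in \<open>auto simp: exp_add\<close>)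
    have b: "AE w in M. real_cond_exp M (F Tp) (\<lambda>v. exp C0 * exp (path_int X c Tp Tj v)) w
        = exp C0 * real_cond_exp M (F Tp) (\<lambda>v. exp (path_int X c Tp Tj v)) w"
      by (rule STp.real_cond_exp_cmult[OF iA])
    from a b NA show ?thesis
    proof eventually_elim
      case (elim w)
      have "real_cond_exp M (F Tp) (\<lambda>w. exp (path_int X c Tp Tj w)) w
          = exp (Re (\<Phi> 0 1 (Tj - Tp) c + cinner (\<Psi> 0 1 (Tj - Tp) c) (X Tp w)))"
        by (rule creal[OF elim(3)]) (use im0 in simp)
      then show ?case using elim(1,2) by simp
    qed
  qed
  define \<gamma>q where "\<gamma>q = - (a + q *\<^sub>R b)"
  have iB: "integrable M (\<lambda>w. exp (path_int X \<gamma>q Tp Tj w))"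
  proof -
    have i: "integrable M (\<lambda>w. exp AQ0 * exp (- (LBINT s:{Tp..Tj}. (a0 s + a \<bullet> X s w) + q * (b0 s + b \<bullet> X s w))))"
      using int_rcl by auto
    have e: "\<And>w. w \<in> space M \<Longrightarrow> exp AQ0 * exp (- (LBINT s:{Tp..Tj}. (a0 s + a \<bullet> X s w) + q * (b0 s + b \<bullet> X s w))) = exp (path_int X \<gamma>q Tp Tj w)"
      using I2 PI by (simp add: mult_exp_exp \<gamma>q_def inner_diff_left inner_add_left)
    show ?thesis by (rule iffD1[OF Bochner_Integration.integrable_cong[OF refl e] i])
  qed
  have DA: "AE w in M. complex_of_real (real_cond_exp M (F Tp) (\<lambda>w. exp (path_int X \<gamma>q Tp Tj w)) w)
      = exp (\<Phi> 0 1 (Tj - Tp) \<gamma>q + cinner (\<Psi> 0 1 (Tj - Tp) \<gamma>q) (X Tp w))"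
    using affine01[OF M sub joint_meas affine Tp0 TpTj iB] .
  have Dn: "AE w in M. real_cond_exp M (F Tp) (\<lambda>v. exp (- (LBINT s:{Tp..Tj}. (a0 s + a \<bullet> X s v) + q * (b0 s + b \<bullet> X s v)))) w
      = exp (- AQ0) * exp (Re (\<Phi> 0 1 (Tj - Tp) \<gamma>q) + Re (cinner (\<Psi> 0 1 (Tj - Tp) \<gamma>q) (X Tp w)))"
  proof -
    have m1: "(\<lambda>v. exp (- (LBINT s:{Tp..Tj}. (a0 s + a \<bullet> X s v) + q * (b0 s + b \<bullet> X s v)))) \<in> borel_measurable M"
      using int_rcl by auto
    have a: "AE w in M. real_cond_exp M (F Tp) (\<lambda>v. exp (- (LBINT s:{Tp..Tj}. (a0 s + a \<bullet> X s v) + q * (b0 s + b \<bullet> X s v)))) w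
        = real_cond_exp M (F Tp) (\<lambda>v. exp (- AQ0) * exp (path_int X \<gamma>q Tp Tj v)) w"
      by (rule STp.real_cond_exp_cong) (use I2 PI m1 in \<open>auto simp: exp_add \<gamma>q_def exp_diff exp_minus field_simps inner_diff_left inner_add_left\<close>)
    have b: "AE w in M. real_cond_exp M (F Tp) (\<lambda>v. exp (- AQ0) * exp (path_int X \<gamma>q Tp Tj v)) w
        = exp (- AQ0) * real_cond_exp M (F Tp) (\<lambda>v. exp (path_int X \<gamma>q Tp Tj v)) w"
      by (rule STp.real_cond_exp_cmult[OF iB])
    from a b DA show ?thesis
    proof eventually_elim
      case (elim w)
      have "real_cond_exp M (F Tp) (\<lambda>w. exp (path_int X \<gamma>q Tp Tj w)) w
          = exp (Re (\<Phi> 0 1 (Tj - Tp) \<gamma>q + cinner (\<Psi> 0 1 (Tj - Tp) \<gamma>q) (X Tp w)))"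
        by (rule creal[OF elim(3)]) (use im0 in simp)
      then show ?case using elim(1,2) by simp
    qed
  qed
  define Gv where "Gv = \<Psi> 0 1 (Tj - Tp) c - \<Psi> 0 1 (Tj - Tp) \<gamma>q"
  have Zeq: "AE w in M. complex_of_real (Z w) = fT + cinner Gv (X Tp w)"
    using N Dn
  proof eventually_elim
    case (elim w)
    define zc where "zc = Re (\<Phi> 0 1 (Tj - Tp) c) + Re (cinner (\<Psi> 0 1 (Tj - Tp) c) (X Tp w))"
    define zq where "zq = Re (\<Phi> 0 1 (Tj - Tp) \<gamma>q) + Re (cinner (\<Psi> 0 1 (Tj - Tp) \<gamma>q) (X Tp w))"
    define \<rho> where "\<rho> = 1 + (Tj - Tp) * R"
    have rpos: "\<rho> > 0" using strike by (simp add: \<rho>_def)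
    have "Z w = ln (1 / \<rho> * (exp C0 * exp zc / (exp (- AQ0) * exp zq)))"
      unfolding Z_def \<rho>_def zc_def zq_def using elim by simp
    also have "1 / \<rho> * (exp C0 * exp zc / (exp (- AQ0) * exp zq)) = exp (- ln \<rho> + C0 + zc + AQ0 - zq)"
      using rpos by (simp add: exp_add exp_diff exp_minus field_simps)
    finally have Zw: "Z w = - ln \<rho> + C0 + zc + AQ0 - zq" by simp
    show ?case
      unfolding Zw fT_def Gv_def cinner_diff_left I5 \<rho>_def[symmetric] \<gamma>q_def[symmetric]
      using im0
      by (simp add: complex_eq_iff zc_def zq_def)
  qed
  have subTp: "subalgebra (F Tp) (F r)" if "r \<le> Tp" for r
    using filtration.sets_F_mono[OF filt that] filtration.space_F[OF filt]
    by (auto simp: subalgebra_def)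
  obtain P' where P'm[measurable]: "P' \<in> borel_measurable (F Tp)"
    and P'e: "AE w in M. path_int X (- a) t Tp w = P' w"
  proof -
    have "\<exists>g\<in>borel_measurable (F Tp). AE w in M. (LBINT r:{t..Tp}. (- a) \<bullet> X r w) = g w"
    proof (rule int_aemeas[OF M sub joint_inner_meas[OF joint_meas]])
      fix r assume "r \<in> {t..Tp}"
      then have "X r \<in> borel_measurable (F Tp)"
        using measurable_from_subalg[OF subTp adapted] by auto
      then show "(\<lambda>w. (- a) \<bullet> X r w) \<in> borel_measurable (F Tp)" by measurable
    next
      fix w assume "w \<in> space M"
      then show "set_integrable lborel {t..Tp} (\<lambda>r. (- a) \<bullet> X r w)"
        by (intro si_inner paths_int)
    qed
    then show ?thesis using that unfolding path_int_def by blast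
  qed
  have P'M[measurable]: "P' \<in> borel_measurable M" using measurable_from_subalg[OF sub P'm] .
  have XTpF[measurable]: "X Tp \<in> borel_measurable (F Tp)" by (rule adapted)
  have Wd: "W = (\<i> * u) *s Gv + \<Psi> 0 1 (Tj - Tp) (- a)" by (simp add: W_def Gv_def \<gamma>q_def)
  define K where "K w = exp (cinner ((\<i> * u) *s Gv) (X Tp w) + complex_of_real (P' w))" for w
  have Km[measurable]: "K \<in> borel_measurable (F Tp)" unfolding K_def by measurable
  have KM[measurable]: "K \<in> borel_measurable M" using measurable_from_subalg[OF sub Km] .
  define L where "L w = exp (path_int X (- a) Tp Tj w)" for w
  have Lpos: "\<And>w. 0 \<le> L w" unfolding L_def by simp
  define Lr where "Lr w = Re (exp (\<Phi> 0 1 (Tj - Tp) (- a) + cinner (\<Psi> 0 1 (Tj - Tp) (- a)) (X Tp w)))" for w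
  have Lrc: "\<And>w. complex_of_real (Lr w) = exp (\<Phi> 0 1 (Tj - Tp) (- a) + cinner (\<Psi> 0 1 (Tj - Tp) (- a)) (X Tp w))"
    unfolding Lr_def using im0 by (simp add: exp_im0)
  have Lrm[measurable]: "Lr \<in> borel_measurable M" unfolding Lr_def by measurable
  have iL: "integrable M L"
  proof -
    have i: "integrable M (\<lambda>w. exp A1 * exp (- (LBINT s:{Tp..Tj}. a0 s + a \<bullet> X s w)))"
      using int_rc1 by auto
    have e: "\<And>w. w \<in> space M \<Longrightarrow> exp A1 * exp (- (LBINT s:{Tp..Tj}. a0 s + a \<bullet> X s w)) = L w"
      using I3 PI by (simp add: mult_exp_exp L_def)
    show ?thesis by (rule iffD1[OF Bochner_Integration.integrable_cong[OF refl e] i])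
  qed
  have ceL: "AE w in M. real_cond_exp M (F Tp) L w = Lr w"
  proof -
    have "AE w in M. complex_of_real (real_cond_exp M (F Tp) L w)
      = exp (\<Phi> 0 1 (Tj - Tp) (- a) + cinner (\<Psi> 0 1 (Tj - Tp) (- a)) (X Tp w))"
      using affine01[OF M sub joint_meas affine Tp0 TpTj iL[unfolded L_def]] unfolding L_def .
    then show ?thesis by eventually_elim (simp add: Lrc[symmetric])
  qed
  define Y where "Y w = exp (cinner W (X Tp w) + complex_of_real (path_int X (- a) t Tp w))" for w
  have Ym[measurable]: "Y \<in> borel_measurable M" unfolding Y_def by measurable
  have KLr: "AE w in M. K w * complex_of_real (Lr w) = exp (\<Phi> 0 1 (Tj - Tp) (- a)) * Y w"
    using P'e
  proof eventually_elim
    case (elim w)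
    show ?case unfolding K_def Lrc Y_def Wd cinner_add_left elim
      by (simp add: mult_exp_exp algebra_simps)
  qed
  have iY: "integrable M Y" using u_ok unfolding Y_def .
  have intKL: "integrable M (\<lambda>w. K w * complex_of_real (Lr w))"
  proof -
    have "integrable M (\<lambda>w. exp (\<Phi> 0 1 (Tj - Tp) (- a)) * Y w)" using iY by auto
    then show ?thesis using KLr by (subst integrable_cong_AE) auto
  qed
  have Hsub: "subalgebra (F Tp) (F t)" by (rule subTp[OF tTp])
  note TP = tower_pullout[OF M sub Hsub Km iL Lpos Lrm ceL intKL]
  interpret St: finite_measure_subalgebra M "F t" by unfold_locales (rule sub)
  have ofexp: "\<And>r. complex_of_real (exp r) = exp (complex_of_real r)" by (rule exp_of_real[symmetric])
  define c1 where "c1 = exp (complex_of_real (- A0)) * exp (\<i> * u * fT)"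
  define Hf where "Hf v = complex_of_real (exp (- (LBINT s:{t..Tj}. a0 s + a \<bullet> X s v))) * exp (\<i> * u * complex_of_real (Z v))" for v
  have Zm[measurable]: "Z \<in> borel_measurable M" unfolding Z_def by measurable
  have rc2m[measurable]: "(\<lambda>v. exp (- (LBINT s:{t..Tj}. a0 s + a \<bullet> X s v))) \<in> borel_measurable M"
    using int_rc2 by auto
  have Hfm[measurable]: "Hf \<in> borel_measurable M" unfolding Hf_def by measurable
  have Lm[measurable]: "L \<in> borel_measurable M" using iL by auto
  have HfAE: "AE w in M. Hf w = c1 * (K w * complex_of_real (L w))"
    using P'e Zeq AE_space
  proof eventually_elim
    case (elim w)
    have P'w: "P' w = - (a \<bullet> V t Tp w)" using elim(1) PI[OF elim(3)] by simp
    have Lw: "L w = exp (- (a \<bullet> V Tp Tj w))" using PI[OF elim(3)] by (simp add: L_def)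
    show ?case
      unfolding Hf_def c1_def K_def I4[OF elim(3)] elim(2) P'w Lw cinner_scale_left ofexp
      by (simp only: mult_exp_exp) (rule arg_cong[where f=exp], simp add: algebra_simps)
  qed
  have HE1: "AE w in M. cond_expC M (F t) Hf w = cond_expC M (F t) (\<lambda>w. c1 * (K w * complex_of_real (L w))) w"
    by (rule St.cond_expC_cong[OF HfAE]) measurable
  have HE2: "AE w in M. cond_expC M (F t) (\<lambda>w. c1 * (K w * complex_of_real (L w))) w
      = c1 * cond_expC M (F t) (\<lambda>w. K w * complex_of_real (L w)) w"
    by (rule St.cond_expC_cmult[OF TP(2)])
  have HE4: "AE w in M. cond_expC M (F t) (\<lambda>w. K w * complex_of_real (Lr w)) w
      = cond_expC M (F t) (\<lambda>w. exp (\<Phi> 0 1 (Tj - Tp) (- a)) * Y w) w"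
    by (rule St.cond_expC_cong[OF KLr]) measurable
  have HE5: "AE w in M. cond_expC M (F t) (\<lambda>w. exp (\<Phi> 0 1 (Tj - Tp) (- a)) * Y w) w
      = exp (\<Phi> 0 1 (Tj - Tp) (- a)) * cond_expC M (F t) Y w"
    by (rule St.cond_expC_cmult[OF iY])
  have HE6: "AE w in M. cond_expC M (F t) Y w = exp (\<Phi> W 1 (Tp - t) (- a) + cinner (\<Psi> W 1 (Tp - t) (- a)) (X t w))"
    using affine[unfolded affine_property_def, rule_format, of t Tp W 1 "- a", OF times(1) tTp] u_ok
    unfolding Y_def by simp
  from HE1 HE2 TP(1) HE4 HE5 HE6 show ?thesis
  proof eventually_elim
    case (elim w)
    have "cond_expC M (F t) Hf w = c1 * (exp (\<Phi> 0 1 (Tj - Tp) (- a)) * exp (\<Phi> W 1 (Tp - t) (- a) + cinner (\<Psi> W 1 (Tp - t) (- a)) (X t w)))"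
      using elim by simp
    also have "\<dots> = exp (\<i> * u * fT - complex_of_real (LBINT s:{t..Tj}. a0 s) + \<Phi> 0 1 (Tj - Tp) (- a)
                + \<Phi> W 1 (Tp - t) (- a) + cinner (\<Psi> W 1 (Tp - t) (- a)) (X t w))"
      unfolding c1_def A0_def
      by (simp only: mult_exp_exp) (rule arg_cong[where f=exp], simp add: algebra_simps)
    finally show ?case unfolding Hf_def by simp
  qed
qed

end
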